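(* Let $n\ge 1$, $k\ge 2$, and consider the tensor-based HPDS $\dot{\mathbf x}(t)=\mathscr A\mathbf x(t)^{k-1}$ with unknown almost symmetric $\mathscr A\in\mathbb R^{n\times\cdots\times n}$ ($k$ modes). Let $\mathbf X_0,\mathbf X_1\in\mathbb R^{n\times T}$ be the sampled state and state-derivative data matrices, and $\hat{\mathbf X}_0=\mathbf X_0\odot\mathbf X_0\odot\cdots\odot\mathbf X_0$ ($k-1$ factors). Then the data $(\mathbf X_0,\mathbf X_1)$ determine $\mathscr A$ uniquely (i.e. there is exactly one almost symmetric tensor $\mathscr A$ with $\mathbf A_{(k)}\hat{\mathbf X}_0=\mathbf X_1$) if and only if $$\mathrm{rank}(\hat{\mathbf X}_0)=\sum_{j=1}^{\min\{n,k-1\}}\frac{n!}{j!(n-j)!}\cdot\frac{(k-2)!}{(j-1)!(k-j-1)!}.$$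
   Context: A cubical $k$th-order tensor $\mathscr A\in\mathbb R^{n\times\cdots\times n}$ is almost symmetric if its entries $\mathscr A_{j_1\cdots j_k}$ are invariant under every permutation of the first $k-1$ indices $j_1,\dots,j_{k-1}$. The $k$-mode matricization $\mathbf A_{(k)}\in\mathbb R^{n\times n^{k-1}}$ is defined by $(\mathbf A_{(k)})_{j_k,c}=\mathscr A_{j_1\cdots j_k}$ with $c=j_1+\sum_{i=2}^{k-1}(j_i-1)n^{i-1}$. For $\mathbf x\in\mathbb R^n$, $\mathscr A\mathbf x^{k-1}:=\mathscr A\times_1\mathbf x\times_2\cdots\times_{k-1}\mathbf x\in\mathbb R^n$ (contraction of the first $k-1$ modes with $\mathbf x$), which equals $\mathbf A_{(k)}\mathbf x^{[k-1]}$ where $\mathbf x^{[k-1]}=\mathbf x\otimes\cdots\otimes\mathbf x$ ($k-1$ factors) is the Kronecker power. The Khatri–Rao product of $\mathbf A\in\mathbb R^{n\times s}$ and $\mathbf B\in\mathbb R^{m\times s}$ is $\mathbf A\odot\mathbf B=[\mathbf a_1\otimes\mathbf b_1,\dots,\mathbf a_s\otimes\mathbf b_s]$ (columnwise Kronecker product). Data: $\mathbf X_0=[\mathbf x(t_0),\mathbf x(t_0+\tau),\dots,\mathbf x(t_0+(T-1)\tau)]$, $\mathbf X_1=[\dot{\mathbf x}(t_0),\dots,\dot{\mathbf x}(t_0+(T-1)\tau)]$ for a trajectory of the system, with sampling time $\tau>0$, so that $\mathbf X_1=\mathbf A_{(k)}\hat{\mathbf X}_0$. *)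

theory Defs
  imports Complex_Main "Jordan_Normal_Form.DL_Rank"
begin

text \<open>Tensors of order k with mode sizes n, indices 0-based, represented as functions on
index lists; only lists of length k with entries < n are meaningful.\<close>

type_synonym tensor = "nat list \<Rightarrow> real"

definition valid_idx :: "nat \<Rightarrow> nat \<Rightarrow> nat list set" where
  "valid_idx n m = {js. length js = m \<and> set js \<subseteq> {..<n}}"

text \<open>A tensor in R^{n x ... x n} (k modes): zero outside the valid index range
(so that equality of tensors is equality of their entries).\<close>
definition is_tensor :: "nat \<Rightarrow> nat \<Rightarrow> tensor \<Rightarrow> bool" where
  "is_tensor n k A \<longleftrightarrow> (\<forall>js. js \<notin> valid_idx n k \<longrightarrow> A js = 0)"

definition almost_symmetric :: "nat \<Rightarrow> nat \<Rightarrow> tensor \<Rightarrow> bool" where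
  "almost_symmetric n k A \<longleftrightarrow> is_tensor n k A \<and>
     (\<forall>js \<in> valid_idx n k. \<forall>p. p permutes {..<k-1} \<longrightarrow>
        A (map (\<lambda>i. js ! p i) [0..<k]) = A js)"

definition tensor_apply :: "nat \<Rightarrow> nat \<Rightarrow> tensor \<Rightarrow> (nat \<Rightarrow> real) \<Rightarrow> nat \<Rightarrow> real" where
  "tensor_apply n k A x i =
     (\<Sum>js \<in> valid_idx n (k-1). A (js @ [i]) * (\<Prod>m<k-1. x (js ! m)))"

text \<open>k-mode matricization: entry (j_k, c) with c = j_1 + sum_{i>=2} j_i n^(i-1) (0-based).\<close>
definition matricize :: "nat \<Rightarrow> nat \<Rightarrow> tensor \<Rightarrow> real mat" where
  "matricize n k A = mat n (n^(k-1))
     (\<lambda>(i, c). A (map (\<lambda>m. c div n^m mod n) [0..<k-1] @ [i]))"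

definition khatri_rao :: "real mat \<Rightarrow> real mat \<Rightarrow> real mat" where
  "khatri_rao A B = mat (dim_row A * dim_row B) (dim_col A)
     (\<lambda>(r, c). A $$ (r div dim_row B, c) * B $$ (r mod dim_row B, c))"

fun kr_power :: "real mat \<Rightarrow> nat \<Rightarrow> real mat" where
  "kr_power X 0 = mat 1 (dim_col X) (\<lambda>_. 1)"
| "kr_power X (Suc 0) = X"
| "kr_power X (Suc (Suc m)) = khatri_rao X (kr_power X (Suc m))"

definition mat_rank :: "real mat \<Rightarrow> nat" where
  "mat_rank M = vec_space.rank (dim_row M) M"

definition data_mat :: "nat \<Rightarrow> nat \<Rightarrow> real \<Rightarrow> real \<Rightarrow> (real \<Rightarrow> nat \<Rightarrow> real) \<Rightarrow> real mat" where
  "data_mat n T t0 \<tau> x = mat n T (\<lambda>(i, s). x (t0 + real s * \<tau>) i)"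

end

theory Submission
  imports Defs "Jordan_Normal_Form.Gram_Schmidt"
begin

definition symset :: "(nat \<Rightarrow> 'b) \<Rightarrow> nat \<Rightarrow> 'a::field vec set" where
  "symset cls N = {v \<in> carrier_vec N. \<forall>c<N. \<forall>c'<N. cls c = cls c' \<longrightarrow> v$c = v$c'}"

definition indv :: "(nat \<Rightarrow> 'b) \<Rightarrow> nat \<Rightarrow> 'b \<Rightarrow> 'a::field vec" where
  "indv cls N \<gamma> = vec N (\<lambda>c. if cls c = \<gamma> then 1 else 0)"

context vec_space
begin

abbreviation EE :: "(nat \<Rightarrow> 'b) \<Rightarrow> 'a vec set" where
  "EE cls \<equiv> (indv cls n :: 'b \<Rightarrow> 'a vec) ` (cls ` {..<n})"

lemma indv_inj: "inj_on (indv cls n :: 'b \<Rightarrow> 'a vec) (cls ` {..<n})"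
proof (rule inj_onI)
  fix x y assume "x \<in> cls ` {..<n}" "y \<in> cls ` {..<n}" and eq: "indv cls n x = (indv cls n y :: 'a vec)"
  then obtain c where c: "c < n" "cls c = x" by auto
  have "indv cls n x $ c = (indv cls n y :: 'a vec) $ c" using eq by simp
  then show "x = y" using c unfolding indv_def by (auto split: if_splits)
qed

lemma indv_carrier: "EE cls \<subseteq> carrier_vec n"
  unfolding indv_def by auto

lemma card_indv: "card (EE cls) = card (cls ` {..<n})"
  by (rule card_image[OF indv_inj])

lemma lincomb_indv_index:
  assumes c: "c < n" and A: "A \<subseteq> EE cls"
  shows "lincomb a A $ c = (\<Sum>x\<in>A. a x * x $ c)"
  by (rule lincomb_index[OF c subset_trans[OF A indv_carrier]])

lemma span_indv: "span (EE cls) = symset cls n"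
proof
  let ?E = "EE cls"
  have fin: "finite ?E" by auto
  show "span ?E \<subseteq> symset cls n"
  proof
    fix v assume "v \<in> span ?E"
    then obtain a where v: "v = lincomb a ?E" using finite_span[OF fin indv_carrier] by auto
    have vc: "v \<in> carrier_vec n" using v lincomb_closed indv_carrier
      by (metis \<open>v \<in> span ?E\<close> span_closed)
    show "v \<in> symset cls n" unfolding symset_def
    proof (intro CollectI conjI allI impI vc)
      fix c c' assume c: "c < n" "c' < n" "cls c = cls c'"
      have "v $ c = (\<Sum>x\<in>?E. a x * x $ c)" using v lincomb_indv_index[OF c(1) subset_refl] by simp
      also have "\<dots> = (\<Sum>x\<in>?E. a x * x $ c')"
        by (rule sum.cong, auto simp: indv_def c)
      also have "\<dots> = v $ c'" unfolding v by (rule lincomb_indv_index[OF c(2) subset_refl, symmetric])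
      finally show "v $ c = v $ c'" .
    qed
  qed
  show "symset cls n \<subseteq> span ?E"
  proof
    fix v :: "'a vec" assume vs: "v \<in> symset cls n"
    define rep where "rep \<gamma> = (SOME c. c < n \<and> cls c = \<gamma>)" for \<gamma>
    have rep: "rep \<gamma> < n \<and> cls (rep \<gamma>) = \<gamma>" if "\<gamma> \<in> cls ` {..<n}" for \<gamma>
      unfolding rep_def by (rule someI_ex, insert that, auto)
    define a where "a x = v $ rep (inv_into (cls ` {..<n}) (indv cls n :: 'b \<Rightarrow> 'a vec) x)" for x
    have vc: "v \<in> carrier_vec n" using vs unfolding symset_def by auto
    have "lincomb a ?E = v"
    proof (rule eq_vecI)
      show "dim_vec (lincomb a ?E) = dim_vec v" using vc lincomb_closed[OF indv_carrier, of a cls] by auto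
      fix c assume "c < dim_vec v"
      then have c: "c < n" using vc by auto
      have "lincomb a ?E $ c = (\<Sum>x\<in>?E. a x * x $ c)" using lincomb_indv_index[OF c subset_refl] by simp
      also have "\<dots> = (\<Sum>\<gamma>\<in>cls ` {..<n}. a (indv cls n \<gamma>) * indv cls n \<gamma> $ c)"
        by (rule sum.reindex[OF indv_inj, unfolded comp_def])
      also have "\<dots> = (\<Sum>\<gamma>\<in>cls ` {..<n}. if \<gamma> = cls c then v $ rep \<gamma> else 0)"
      proof (rule sum.cong[OF refl])
        fix \<gamma> assume g: "\<gamma> \<in> cls ` {..<n}"
        have "a (indv cls n \<gamma>) = v $ rep \<gamma>" unfolding a_def using inv_into_f_f[OF indv_inj g] by simp
        then show "a (indv cls n \<gamma>) * indv cls n \<gamma> $ c = (if \<gamma> = cls c then v $ rep \<gamma> else 0)"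
          using c by (auto simp: indv_def)
      qed
      also have "\<dots> = v $ rep (cls c)" using c by (simp add: sum.delta')
      also have "\<dots> = v $ c"
      proof -
        have r: "rep (cls c) < n" "cls (rep (cls c)) = cls c" using rep[of "cls c"] c by auto
        have symv: "\<And>d d'. d < n \<Longrightarrow> d' < n \<Longrightarrow> cls d = cls d' \<Longrightarrow> v $ d = v $ d'"
          using vs unfolding symset_def by blast
        show ?thesis by (rule symv[OF r(1) c r(2)])
      qed
      finally show "lincomb a ?E $ c = v $ c" .
    qed
    then show "v \<in> span ?E" using finite_span[OF fin indv_carrier] by auto
  qed
qed

lemma indv_indpt: "lin_indpt (EE cls)"
proof
  let ?E = "EE cls"
  assume "lin_dep ?E"
  then obtain A a u where A: "finite A" "A \<subseteq> ?E" "a \<in> A \<rightarrow> carrier class_ring"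
    "lincomb a A = \<zero>\<^bsub>V\<^esub>" "u \<in> A" "a u \<noteq> \<zero>\<^bsub>class_ring\<^esub>"
    unfolding lin_dep_def by auto
  obtain c where c: "c < n" "u = indv cls n (cls c)" using A by auto
  have "0 = lincomb a A $ c" using A c by simp
  also have "\<dots> = (\<Sum>x\<in>A. a x * x $ c)" using lincomb_indv_index[OF c(1) A(2)] by simp
  also have "\<dots> = (\<Sum>x\<in>A. if x = u then a x else 0)"
  proof (rule sum.cong)
    fix x assume "x \<in> A"
    then obtain d where d: "d < n" "x = indv cls n (cls d)" using A by auto
    show "a x * x $ c = (if x = u then a x else 0)"
    proof (cases "cls d = cls c")
      case True then show ?thesis using d c by (simp add: indv_def)
    next
      case False
      have "x \<noteq> u"
      proof
        assume "x = u"
        then have "indv cls n (cls d) = (indv cls n (cls c) :: 'a vec)" using d c by simp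
        from inj_onD[OF indv_inj this] d c False show False by auto
      qed
      then show ?thesis using d c False by (simp add: indv_def)
    qed
  qed simp
  also have "\<dots> = a u" using A by (simp add: sum.delta')
  finally show False using A by simp
qed

end

context vec_space
begin

lemma orth_span:
  assumes X: "X \<subseteq> carrier_vec n" "finite X" and v: "v \<in> carrier_vec n"
    and orth: "\<And>x. x \<in> X \<Longrightarrow> x \<bullet> v = 0" and w: "w \<in> span X"
  shows "w \<bullet> v = 0"
proof -
  obtain a where wa: "w = lincomb a X" using w finite_span[OF X(2) X(1)] by auto
  have "w \<bullet> v = (\<Sum>i<n. w $ i * v $ i)" using v by (simp add: scalar_prod_def lessThan_atLeast0)
  also have "\<dots> = (\<Sum>i<n. (\<Sum>x\<in>X. a x * x $ i) * v $ i)"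
    by (rule sum.cong[OF refl], simp add: wa lincomb_index[OF _ X(1)])
  also have "\<dots> = (\<Sum>i<n. \<Sum>x\<in>X. a x * (x $ i * v $ i))"
    by (simp add: sum_distrib_right mult.assoc)
  also have "\<dots> = (\<Sum>x\<in>X. a x * (\<Sum>i<n. x $ i * v $ i))"
    by (subst sum.swap, simp add: sum_distrib_left)
  also have "\<dots> = (\<Sum>x\<in>X. a x * (x \<bullet> v))"
    using v by (simp add: scalar_prod_def lessThan_atLeast0)
  also have "\<dots> = 0" using orth by simp
  finally show ?thesis .
qed

end

lemma conj_vec_id:
  assumes "\<And>x::'a::conjugatable_field. conjugate x = x"
  shows "conjugate (v :: 'a vec) = v"
  by (rule eq_vecI, auto simp: assms)

context cof_vec_space
begin

lemma la_main:
  fixes cls :: "nat \<Rightarrow> 'b" and M :: "'a mat"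
  assumes conj: "\<And>x::'a. conjugate x = x"
    and M: "M \<in> carrier_mat n nc"
    and colsym: "set (cols M) \<subseteq> symset cls n"
  shows "rank M = card (cls ` {..<n}) \<longleftrightarrow>
    (\<forall>v \<in> symset cls n. (\<forall>t<nc. col M t \<bullet> v = 0) \<longrightarrow> v = 0\<^sub>v n)"
proof -
  let ?E = "EE cls"
  let ?C = "set (cols M)"
  let ?W = "span ?C"
  have Ec: "?E \<subseteq> carrier_vec n" by (rule indv_carrier)
  have finE: "finite ?E" by simp
  have Cc: "?C \<subseteq> carrier_vec n" using M cols_dim by blast
  have spanE: "span ?E = symset cls n" by (rule span_indv)
  have subE: "submodule class_ring (span ?E) V" by (rule span_is_submodule[OF Ec])
  have CE: "?C \<subseteq> span ?E" using colsym spanE by simp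
  have WE: "?W \<subseteq> span ?E" by (rule span_is_subset[OF CE subE])
  have colC: "col M t \<in> ?C" if "t < nc" for t
    using that M by (metis carrier_matD(2) cols_length cols_nth nth_mem)
  have Ccol: "\<exists>t<nc. w = col M t" if "w \<in> ?C" for w
    using that M by (metis carrier_matD(2) cols_length cols_nth in_set_conv_nth)
  obtain U where Umax: "maximal U (\<lambda>T. T \<subseteq> ?C \<and> lin_indpt T)"
    using maximal_exists[of "(\<lambda>T. T \<subseteq> ?C \<and> lin_indpt T)" "card ?C" "{}"]
    by (meson List.finite_set card_mono empty_iff empty_subsetI finite_lin_indpt2 rev_finite_subset)
  have rankU: "rank M = card U" by (rule rank_card_indpt[OF M Umax])
  have UC: "U \<subseteq> ?C" and Uind: "lin_indpt U" using Umax unfolding maximal_def by auto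
  have finU: "finite U" using UC finite_subset by auto
  have Uc: "U \<subseteq> carrier_vec n" using UC Cc by auto
  have spanU: "span U = ?W"
  proof
    show "span U \<subseteq> ?W" by (rule span_is_monotone[OF UC])
    have "?C \<subseteq> span U"
    proof
      fix w assume w: "w \<in> ?C"
      show "w \<in> span U"
      proof (rule ccontr)
        assume nw: "w \<notin> span U"
        have wU: "w \<notin> U" using nw span_mem[OF Uc] by auto
        have wc: "w \<in> carrier_vec n" using w Cc by auto
        have "lin_indpt (U \<union> {w})" using lin_dep_iff_in_span[OF Uc Uind wc wU] nw by simp
        then have "U \<union> {w} = U" using Umax w UC unfolding maximal_def by auto
        then show False using wU by auto
      qed
    qed
    then show "?W \<subseteq> span U" by (rule span_is_subset[OF _ span_is_submodule[OF Uc]])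
  qed
  have WC: "w \<bullet> v = 0" if v: "v \<in> carrier_vec n" and o: "\<forall>t<nc. col M t \<bullet> v = 0" and w: "w \<in> ?W" for v w
    by (rule orth_span[OF Cc _ v _ w], insert o Ccol, auto)
  show ?thesis
  proof
    assume rk: "rank M = card (cls ` {..<n})"
    have cardU: "card U = card ?E" using rk rankU card_indv[of cls] by simp
    have vsE: "vectorspace class_ring (vs (span ?E))"
      by (rule subspace_is_vs[OF span_is_subspace[OF Ec]])
    have EinE: "?E \<subseteq> span ?E" by (rule in_own_span[OF Ec])
    have UinE: "U \<subseteq> span ?E" using UC CE by auto
    have spE: "LinearCombinations.module.span class_ring (vs (span ?E)) ?E = span ?E"
      using span_li_not_depend(1)[OF EinE subE] by simp
    have dimE: "vectorspace.dim class_ring (vs (span ?E)) = card ?E"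
    proof -
      have "maximal ?E (\<lambda>T. T \<subseteq> ?E \<and> lin_indpt T)"
        unfolding maximal_def using indv_indpt by auto
      from dim_span[OF Ec finE this] show ?thesis .
    qed
    have fd: "vectorspace.fin_dim class_ring (vs (span ?E))"
      unfolding vectorspace.fin_dim_def[OF vsE] by (rule exI[of _ ?E], insert EinE spE, auto)
    have liU: "\<not> LinearCombinations.module.lin_dep class_ring (vs (span ?E)) U"
      using span_li_not_depend(2)[OF UinE subE] Uind by simp
    have "vectorspace.basis class_ring (vs (span ?E)) U"
      by (rule vectorspace.dim_li_is_basis[OF vsE fd finU], insert UinE liU dimE cardU, auto)
    then have "LinearCombinations.module.span class_ring (vs (span ?E)) U = span ?E"
      unfolding vectorspace.basis_def[OF vsE] by auto
    then have "span U = span ?E" using span_li_not_depend(1)[OF UinE subE] by simp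
    then have WeqE: "?W = span ?E" using spanU by simp
    show "\<forall>v \<in> symset cls n. (\<forall>t<nc. col M t \<bullet> v = 0) \<longrightarrow> v = 0\<^sub>v n"
    proof (intro ballI impI)
      fix v assume vS: "v \<in> symset cls n" and o: "\<forall>t<nc. col M t \<bullet> v = 0"
      have vc: "v \<in> carrier_vec n" using vS unfolding symset_def by auto
      have "v \<in> ?W" using vS WeqE spanE by simp
      then have "v \<bullet> v = 0" by (rule WC[OF vc o])
      then have "v \<bullet>c v = 0" using conj_vec_id[OF conj] by simp
      then show "v = 0\<^sub>v n" using vc by simp
    qed
  next
    assume H: "\<forall>v \<in> symset cls n. (\<forall>t<nc. col M t \<bullet> v = 0) \<longrightarrow> v = 0\<^sub>v n"
    show "rank M = card (cls ` {..<n})"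
    proof (rule ccontr)
      assume rk: "rank M \<noteq> card (cls ` {..<n})"
      have "?W \<noteq> span ?E"
      proof
        assume eq: "?W = span ?E"
        have "rank M = vectorspace.dim class_ring (vs (span ?E))"
          unfolding rank_def using eq M by simp
        also have "\<dots> = card ?E"
        proof -
          have "maximal ?E (\<lambda>T. T \<subseteq> ?E \<and> lin_indpt T)"
            unfolding maximal_def using indv_indpt by auto
          from dim_span[OF Ec finE this] show ?thesis .
        qed
        finally show False using rk card_indv[of cls] by simp
      qed
      then obtain s where s: "s \<in> span ?E" "s \<notin> ?W" using WE by auto
      have sc: "s \<in> carrier_vec n" using s(1) Ec by (meson span_closed)
      obtain ws where ws: "distinct ws" "set ws = U" using finite_distinct_list[OF finU] by auto
      define us where "us = gram_schmidt n ws"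
      have wsc: "set ws \<subseteq> carrier_vec n" using ws Uc by simp
      have ind': "\<not> lin_dep (set ws)" using ws Uind by simp
      note gs = gram_schmidt_result[OF wsc ws(1) ind' us_def]
      have spus: "span (set us) = ?W" using gs(1) ws spanU by simp
      have snus: "s \<notin> span (set us)" using s spus by simp
      define v where "v = adjuster n s us + s"
      have v0: "v \<noteq> 0\<^sub>v n" unfolding v_def by (rule adjust_nonzero[OF gs(3) gs(5) sc snus])
      have adjW: "adjuster n s us \<in> span ?E"
        using adjuster_in_span[OF sc gs(3) gs(5)] spus WE by auto
      have vE: "v \<in> span ?E" unfolding v_def
        using span_add1[OF Ec adjW s(1)] by simp
      have vc: "v \<in> carrier_vec n" using vE Ec by (meson span_closed)
      have ou: "u \<bullet> v = 0" if u: "u \<in> set us" for u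
      proof -
        obtain i where i: "i < length us" "u = us ! i" using u by (metis in_set_conv_nth)
        have "v \<bullet>c us ! i = 0" unfolding v_def by (rule adjust_zero[OF gs(3) gs(2) sc i(1)])
        then have "v \<bullet> u = 0" using i conj_vec_id[OF conj] by simp
        moreover have "u \<in> carrier_vec n" using u gs(3) by auto
        ultimately show ?thesis using comm_scalar_prod[OF _ vc] by metis
      qed
      have "\<forall>t<nc. col M t \<bullet> v = 0"
      proof (intro allI impI)
        fix t assume t: "t < nc"
        have "col M t \<in> span (set us)" using colC[OF t] spus span_mem[OF Cc] by auto
        then show "col M t \<bullet> v = 0" using orth_span[OF gs(3) List.finite_set vc] ou by blast
      qed
      then have "v = 0\<^sub>v n" using H vE spanE by auto
      then show False using v0 by simp
    qed
  qed
qed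

end

definition dg :: "nat \<Rightarrow> nat \<Rightarrow> nat \<Rightarrow> nat list" where
  "dg n m c = map (\<lambda>j. c div n^j mod n) [0..<m]"

fun num :: "nat \<Rightarrow> nat list \<Rightarrow> nat" where
  "num n [] = 0"
| "num n (a # js) = a + n * num n js"

lemma dg_length[simp]: "length (dg n m c) = m" by (simp add: dg_def)

lemma dg_nth[simp]: "j < m \<Longrightarrow> dg n m c ! j = c div n^j mod n" by (simp add: dg_def)

lemma dg_Suc: "dg n (Suc m) c = c mod n # dg n m (c div n)"
proof -
  have "[0..<Suc m] = 0 # map Suc [0..<m]" by (simp add: map_Suc_upt upt_conv_Cons)
  then show ?thesis by (simp add: dg_def div_mult2_eq)
qed

lemma num_dg: "num n (dg n m c) = c mod n^m"
proof (induction m arbitrary: c)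
  case 0 then show ?case by (simp add: dg_def)
next
  case (Suc m)
  show ?case by (simp add: dg_Suc Suc mod_mult2_eq)
qed

lemma dg_num: "n > 0 \<Longrightarrow> \<forall>a\<in>set js. a < n \<Longrightarrow> dg n (length js) (num n js) = js"
proof (induction js)
  case Nil then show ?case by (simp add: dg_def)
next
  case (Cons a js)
  then show ?case by (simp add: dg_Suc)
qed

lemma num_less: "n > 0 \<Longrightarrow> \<forall>a\<in>set js. a < n \<Longrightarrow> num n js < n ^ length js"
proof (induction js)
  case Nil then show ?case by simp
next
  case (Cons a js)
  then have a: "a < n" and h: "num n js < n ^ length js" by auto
  then have "num n js + 1 \<le> n ^ length js" by simp
  then have "n * (num n js + 1) \<le> n * n ^ length js" by (rule mult_le_mono2)
  then show ?case using a by (simp add: algebra_simps)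
qed

lemma dg_valid: "n > 0 \<Longrightarrow> dg n m c \<in> valid_idx n m"
  unfolding valid_idx_def dg_def by auto

lemma dg_bij: assumes n: "n > 0" shows "bij_betw (dg n m) {..<n^m} (valid_idx n m)"
proof (rule bij_betwI')
  fix c c' assume c: "c \<in> {..<n^m}" "c' \<in> {..<n^m}"
  show "(dg n m c = dg n m c') = (c = c')"
  proof
    assume "dg n m c = dg n m c'"
    then have "num n (dg n m c) = num n (dg n m c')" by simp
    then have "c mod n^m = c' mod n^m" by (simp only: num_dg)
    then show "c = c'" using c by simp
  qed simp
next
  fix c assume "c \<in> {..<n^m}" then show "dg n m c \<in> valid_idx n m" using dg_valid[OF n] by auto
next
  fix js assume js: "js \<in> valid_idx n m"
  then have l: "length js = m" and s: "\<forall>a\<in>set js. a < n" unfolding valid_idx_def by auto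
  show "\<exists>c\<in>{..<n^m}. js = dg n m c"
    using dg_num[OF n s] num_less[OF n s] l by (intro bexI[of _ "num n js"]) auto
qed

lemma mset_valid: "mset ` valid_idx n m = multisets_of_size {..<n} m"
proof
  show "mset ` valid_idx n m \<subseteq> multisets_of_size {..<n} m"
    unfolding valid_idx_def multisets_of_size_def by auto
  show "multisets_of_size {..<n} m \<subseteq> mset ` valid_idx n m"
  proof
    fix X assume X: "X \<in> multisets_of_size {..<n} m"
    obtain xs where xs: "mset xs = X" using ex_mset by blast
    have "xs \<in> valid_idx n m" using X xs unfolding valid_idx_def multisets_of_size_def
      by (auto simp flip: set_mset_mset)
    then show "X \<in> mset ` valid_idx n m" using xs by auto
  qed
qed

lemma card_classes: assumes n: "n > 0"
  shows "card ((\<lambda>c. mset (dg n m c)) ` {..<n^m}) = (n + m - 1) choose m"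
proof -
  have "(\<lambda>c. mset (dg n m c)) ` {..<n^m} = mset ` (dg n m ` {..<n^m})" by auto
  also have "dg n m ` {..<n^m} = valid_idx n m" using dg_bij[OF n] by (simp add: bij_betw_def)
  finally show ?thesis using mset_valid card_multisets_of_size[of "{..<n}" m] by simp
qed

lemma sum_binom: assumes m: "m \<ge> 1"
  shows "(\<Sum>j = 1..min n m. (n choose j) * ((m - 1) choose (j - 1))) = (n + m - 1) choose m"
proof -
  have "(n + m - 1) choose m = (\<Sum>j\<le>m. (n choose j) * ((m - 1) choose (m - j)))"
    using vandermonde[of n "m - 1" m] m by simp
  also have "\<dots> = (\<Sum>j = 1..min n m. (n choose j) * ((m - 1) choose (m - j)))"
  proof (rule sum.mono_neutral_right)
    show "\<forall>j\<in>{..m} - {1..min n m}. (n choose j) * ((m - 1) choose (m - j)) = 0"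
    proof
      fix j assume j: "j \<in> {..m} - {1..min n m}"
      show "(n choose j) * ((m - 1) choose (m - j)) = 0"
      proof (cases "j = 0")
        case True then show ?thesis using m by simp
      next
        case False then have "j > n" using j by auto
        then show ?thesis by simp
      qed
    qed
  qed auto
  also have "\<dots> = (\<Sum>j = 1..min n m. (n choose j) * ((m - 1) choose (j - 1)))"
  proof (rule sum.cong[OF refl])
    fix j assume j: "j \<in> {1..min n m}"
    then have "(m - 1) choose (m - j) = (m - 1) choose (j - 1)"
      using binomial_symmetric[of "j - 1" "m - 1"] by auto
    then show "(n choose j) * ((m - 1) choose (m - j)) = (n choose j) * ((m - 1) choose (j - 1))" by simp
  qed
  finally show ?thesis by simp
qed

lemma digit_mod: fixes n r :: nat assumes n: "n > 0" and j: "j < M"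
  shows "(r mod n^M) div n^j mod n = r div n^j mod n"
proof -
  define q where "q = n^(M-j)"
  have MM: "M = j + (M - j)" using j by simp
  have "n^M = n^(j + (M - j))" by (subst MM, rule refl)
  also have "\<dots> = n^j * n^(M - j)" by (rule power_add)
  finally have "n^M = n^j * n^(M - j)" .
  then have q: "n^M = n^j * q" "q = n^(M-j)" by (simp_all add: q_def)
  have e: "(r mod (n^j * q)) div n^j = r div n^j mod q" using n by (simp add: mod_mult2_eq)
  have e2: "(r mod n^M) div n^j = r div n^j mod q" unfolding q(1) by (rule e)
  have "n dvd q" using q(2) j by simp
  then show ?thesis unfolding e2 by (metis mod_mod_cancel)
qed

lemma kr_power_prop:
  assumes X: "X \<in> carrier_mat n T" and n: "n > 0"
  shows "kr_power X m \<in> carrier_mat (n^m) T \<and>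
    (\<forall>c<n^m. \<forall>t<T. kr_power X m $$ (c, t) = (\<Prod>j<m. X $$ (c div n^j mod n, t)))"
proof (induction m)
  case 0 then show ?case using X by auto
next
  case (Suc m)
  show ?case
  proof (cases m)
    case 0 then show ?thesis using X by auto
  next
    case (Suc m')
    let ?K = "kr_power X m"
    have K: "?K \<in> carrier_mat (n^m) T" using Suc.IH by simp
    have KR: "kr_power X (Suc m) = khatri_rao X ?K" using Suc by simp
    have dims: "kr_power X (Suc m) \<in> carrier_mat (n^Suc m) T"
      unfolding KR khatri_rao_def using X K by auto
    have ent: "kr_power X (Suc m) $$ (c, t) = (\<Prod>j<Suc m. X $$ (c div n^j mod n, t))"
      if c: "c < n^Suc m" and t: "t < T" for c t
    proof -
      have cd: "c div n^m < n" using c by (simp add: less_mult_imp_div_less mult.commute)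
      have cm: "c mod n^m < n^m" using n by simp
      have "kr_power X (Suc m) $$ (c, t) = X $$ (c div n^m, t) * ?K $$ (c mod n^m, t)"
        unfolding KR khatri_rao_def using X K c t by auto
      also have "?K $$ (c mod n^m, t) = (\<Prod>j<m. X $$ ((c mod n^m) div n^j mod n, t))"
        using Suc.IH cm t by simp
      also have "\<dots> = (\<Prod>j<m. X $$ (c div n^j mod n, t))"
        by (rule prod.cong[OF refl], simp add: digit_mod[OF n])
      finally show ?thesis using cd by (simp add: mult.commute)
    qed
    show ?thesis using dims ent by blast
  qed
qed

lemma matricize_entry:
  assumes "i < n" "c < n^m" "k = Suc m"
  shows "matricize n k B $$ (i, c) = B (dg n m c @ [i])"
  using assms unfolding matricize_def dg_def by simp

lemma matricize_carrier: "matricize n k B \<in> carrier_mat n (n^(k-1))"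
  unfolding matricize_def by simp

lemma mult_entry:
  assumes K: "K \<in> carrier_mat (n^m) T" and k: "k = Suc m" and i: "i < n" and t: "t < T"
  shows "(matricize n k B * K) $$ (i, t) = (\<Sum>c<n^m. B (dg n m c @ [i]) * K $$ (c, t))"
proof -
  have "(matricize n k B * K) $$ (i, t) = row (matricize n k B) i \<bullet> col K t"
    using matricize_carrier[of n k B] K i t by (simp add: index_mult_mat)
  also have "\<dots> = (\<Sum>c<n^m. B (dg n m c @ [i]) * K $$ (c, t))"
    using K k i t matricize_carrier[of n k B]
    by (simp add: scalar_prod_def lessThan_atLeast0 matricize_entry)
  finally show ?thesis .
qed

lemma perm_snoc:
  assumes p: "p permutes {..<length xs}"
  shows "map (\<lambda>l. (xs @ [a]) ! p l) [0..<Suc (length xs)] = permute_list p xs @ [a]"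
proof -
  have pm: "p (length xs) = length xs" using p by (simp add: permutes_not_in)
  have pl: "l < length xs \<Longrightarrow> p l < length xs" for l using permutes_in_image[OF p, of l] by simp
  show ?thesis
    by (simp add: permute_list_def pm nth_append pl)
qed

lemma prod_mset_eq:
  assumes "mset xs = mset ys" "length xs = m"
  shows "(\<Prod>j<m. f (xs ! j)) = (\<Prod>j<m. (f (ys ! j) :: real))"
proof -
  obtain p where p: "p permutes {..<length ys}" "permute_list p ys = xs"
    using mset_eq_permutation[OF assms(1)] by blast
  have ly: "length ys = m" using assms by (metis size_mset)
  have "(\<Prod>j<m. f (xs ! j)) = (\<Prod>j<m. f (ys ! p j))"
    using p ly assms(2) by (intro prod.cong, auto simp: permute_list_nth)
  also have "\<dots> = (\<Prod>j<m. f (ys ! j))"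
    using prod.permute[of p "{..<m}" "\<lambda>j. f (ys ! j)"] p ly by (simp add: comp_def)
  finally show ?thesis .
qed

lemma as_rows:
  assumes B: "almost_symmetric n k B" and k: "k = Suc m" and i: "i < n"
    and c: "c < n^m" and c': "c' < n^m" and eq: "mset (dg n m c) = mset (dg n m c')"
  shows "B (dg n m c @ [i]) = B (dg n m c' @ [i])"
proof -
  obtain p where p: "p permutes {..<length (dg n m c')}" "permute_list p (dg n m c') = dg n m c"
    using mset_eq_permutation[OF eq] by blast
  have n: "n > 0" using i by simp
  have js: "dg n m c' @ [i] \<in> valid_idx n k"
    using dg_valid[OF n, of m c'] i k unfolding valid_idx_def by auto
  have pk: "p permutes {..<k-1}" using p k by simp
  have "B (map (\<lambda>l. (dg n m c' @ [i]) ! p l) [0..<k]) = B (dg n m c' @ [i])"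
    using B js pk unfolding almost_symmetric_def by blast
  moreover have "map (\<lambda>l. (dg n m c' @ [i]) ! p l) [0..<k] = dg n m c @ [i]"
    using perm_snoc[OF p(1), of i] p(2) k by simp
  ultimately show ?thesis by simp
qed

theorem mainTheorem1:
  fixes n k T :: nat and t0 \<tau> :: real
    and x xd :: "real \<Rightarrow> nat \<Rightarrow> real" and A :: tensor
  assumes "n \<ge> 1" and "k \<ge> 2" and "\<tau> > 0"
    and "almost_symmetric n k A"
    and "\<And>t i. t \<in> {t0 .. t0 + real (T - 1) * \<tau>} \<Longrightarrow> i < n \<Longrightarrow>
           ((\<lambda>s. x s i) has_real_derivative xd t i) (at t)"
    and "\<And>t i. t \<in> {t0 .. t0 + real (T - 1) * \<tau>} \<Longrightarrow> i < n \<Longrightarrow>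
           xd t i = tensor_apply n k A (x t) i"
  shows "(\<exists>!B. almost_symmetric n k B \<and>
            matricize n k B * kr_power (data_mat n T t0 \<tau> x) (k - 1) = data_mat n T t0 \<tau> xd)
         \<longleftrightarrow> mat_rank (kr_power (data_mat n T t0 \<tau> x) (k - 1))
               = (\<Sum>j = 1..min n (k - 1). (n choose j) * ((k - 2) choose (j - 1)))"
proof -
  define m where "m = k - 1"
  have m1: "m \<ge> 1" and k: "k = Suc m" using assms(2) by (auto simp: m_def)
  have n0: "n > 0" using assms(1) by simp
  define N where "N = n^m"
  define X where "X = data_mat n T t0 \<tau> x"
  define Y where "Y = data_mat n T t0 \<tau> xd"
  define K where "K = kr_power X (k - 1)"
  define cls where "cls c = mset (dg n m c)" for c
  define tt where "tt t = t0 + real t * \<tau>" for t :: nat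
  have Xc: "X \<in> carrier_mat n T" by (simp add: X_def data_mat_def)
  have Yc: "Y \<in> carrier_mat n T" by (simp add: Y_def data_mat_def)
  have Xent: "X $$ (a, t) = x (tt t) a" if "a < n" "t < T" for a t
    using that by (simp add: X_def data_mat_def tt_def)
  have Yent0: "Y $$ (i, t) = xd (tt t) i" if "i < n" "t < T" for i t
    using that by (simp add: Y_def data_mat_def tt_def)
  have KP: "K \<in> carrier_mat N T \<and> (\<forall>c<N. \<forall>t<T. K $$ (c, t) = (\<Prod>j<m. X $$ (c div n^j mod n, t)))"
    using kr_power_prop[OF Xc n0, of m] unfolding K_def N_def m_def by simp
  have Kc: "K \<in> carrier_mat N T" using KP by simp
  have Kent: "K $$ (c, t) = (\<Prod>j<m. x (tt t) (dg n m c ! j))" if "c < N" "t < T" for c t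
    using KP that Xent n0 by simp
  have ttin: "tt t \<in> {t0 .. t0 + real (T - 1) * \<tau>}" if "t < T" for t
  proof -
    have "real t \<le> real (T - 1)" using that by simp
    then have "real t * \<tau> \<le> real (T - 1) * \<tau>" using assms(3) by (simp add: mult_right_mono)
    then show ?thesis using assms(3) by (simp add: tt_def)
  qed
  have Yent: "Y $$ (i, t) = (\<Sum>c<N. A (dg n m c @ [i]) * K $$ (c, t))" if i: "i < n" and t: "t < T" for i t
  proof -
    have "Y $$ (i, t) = tensor_apply n k A (x (tt t)) i" using Yent0[OF i t] assms(6)[OF ttin[OF t] i] by simp
    also have "\<dots> = (\<Sum>js\<in>valid_idx n m. A (js @ [i]) * (\<Prod>j<m. x (tt t) (js ! j)))"
      unfolding tensor_apply_def using k by simp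
    also have "\<dots> = (\<Sum>c<N. A (dg n m c @ [i]) * (\<Prod>j<m. x (tt t) (dg n m c ! j)))"
      unfolding N_def by (rule sum.reindex_bij_betw[OF dg_bij[OF n0], symmetric])
    also have "\<dots> = (\<Sum>c<N. A (dg n m c @ [i]) * K $$ (c, t))"
      by (rule sum.cong[OF refl], simp add: Kent t)
    finally show ?thesis .
  qed
  have sol_iff: "matricize n k B * K = Y \<longleftrightarrow>
      (\<forall>i<n. \<forall>t<T. (\<Sum>c<N. B (dg n m c @ [i]) * K $$ (c, t)) = Y $$ (i, t))" for B
  proof -
    have KcK: "K \<in> carrier_mat (n^(k-1)) T" using Kc N_def m_def by simp
    have dims: "matricize n k B * K \<in> carrier_mat n T" by (rule mult_carrier_mat[OF matricize_carrier KcK])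
    have KcN: "K \<in> carrier_mat (n^m) T" using Kc N_def by simp
    show ?thesis
    proof
      assume eq: "matricize n k B * K = Y"
      show "\<forall>i<n. \<forall>t<T. (\<Sum>c<N. B (dg n m c @ [i]) * K $$ (c, t)) = Y $$ (i, t)"
      proof (intro allI impI)
        fix i t assume i: "i < n" and t: "t < T"
        show "(\<Sum>c<N. B (dg n m c @ [i]) * K $$ (c, t)) = Y $$ (i, t)"
          using mult_entry[OF KcN k i t, of B] eq N_def by simp
      qed
    next
      assume h: "\<forall>i<n. \<forall>t<T. (\<Sum>c<N. B (dg n m c @ [i]) * K $$ (c, t)) = Y $$ (i, t)"
      show "matricize n k B * K = Y"
      proof (rule eq_matI)
        show "dim_row (matricize n k B * K) = dim_row Y" using dims Yc by (metis carrier_matD(1))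
        show "dim_col (matricize n k B * K) = dim_col Y" using dims Yc by (metis carrier_matD(2))
        fix i t assume "i < dim_row Y" "t < dim_col Y"
        then have i: "i < n" and t: "t < T" using Yc by auto
        show "(matricize n k B * K) $$ (i, t) = Y $$ (i, t)"
          using mult_entry[OF KcN k i t, of B] h i t N_def by simp
      qed
    qed
  qed
  have PA: "matricize n k A * K = Y" using sol_iff Yent by simp
  have colsym: "set (cols K) \<subseteq> symset cls N"
  proof
    fix w assume "w \<in> set (cols K)"
    then obtain t where t: "t < T" "w = col K t" using Kc by (metis carrier_matD(2) cols_length cols_nth in_set_conv_nth)
    show "w \<in> symset cls N" unfolding symset_def
    proof (intro CollectI conjI allI impI)
      show "w \<in> carrier_vec N" using t Kc by simp
      fix c c' assume c: "c < N" "c' < N" "cls c = cls c'"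
      have "w $ c = (\<Prod>j<m. x (tt t) (dg n m c ! j))" using t c Kc Kent by simp
      also have "\<dots> = (\<Prod>j<m. x (tt t) (dg n m c' ! j))"
        by (rule prod_mset_eq, insert c(3), auto simp: cls_def)
      also have "\<dots> = w $ c'" using t c Kc Kent by simp
      finally show "w $ c = w $ c'" .
    qed
  qed
  have conj: "\<And>z::real. conjugate z = z" by (simp add: conjugate_real_def)
  have LA: "mat_rank K = card (cls ` {..<N}) \<longleftrightarrow>
      (\<forall>v \<in> symset cls N. (\<forall>t<T. col K t \<bullet> v = 0) \<longrightarrow> v = 0\<^sub>v N)"
    using cof_vec_space.la_main[OF conj Kc colsym] Kc unfolding mat_rank_def by simp
  have card: "card (cls ` {..<N}) = (\<Sum>j = 1..min n (k - 1). (n choose j) * ((k - 2) choose (j - 1)))"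
  proof -
    have "card (cls ` {..<N}) = (n + m - 1) choose m"
      unfolding cls_def N_def by (rule card_classes[OF n0])
    also have "\<dots> = (\<Sum>j = 1..min n m. (n choose j) * ((m - 1) choose (j - 1)))"
      by (rule sum_binom[OF m1, symmetric])
    finally show ?thesis using k by simp
  qed
  have sprod: "col K t \<bullet> v = (\<Sum>c<N. K $$ (c, t) * v $ c)" if "v \<in> carrier_vec N" "t < T" for v t
    using that Kc by (simp add: scalar_prod_def lessThan_atLeast0)
  have main: "(\<exists>!B. almost_symmetric n k B \<and> matricize n k B * K = Y) \<longleftrightarrow>
      (\<forall>v \<in> symset cls N. (\<forall>t<T. col K t \<bullet> v = 0) \<longrightarrow> v = 0\<^sub>v N)"
  proof
    assume U: "\<exists>!B. almost_symmetric n k B \<and> matricize n k B * K = Y"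
    show "\<forall>v \<in> symset cls N. (\<forall>t<T. col K t \<bullet> v = 0) \<longrightarrow> v = 0\<^sub>v N"
    proof (intro ballI impI)
      fix v assume vS: "v \<in> symset cls N" and o: "\<forall>t<T. col K t \<bullet> v = 0"
      have vc: "v \<in> carrier_vec N" using vS unfolding symset_def by simp
      have vsym: "v $ c = v $ c'" if "c < N" "c' < N" "cls c = cls c'" for c c'
        using vS that unfolding symset_def by blast
      show "v = 0\<^sub>v N"
      proof (rule ccontr)
        assume v0: "v \<noteq> 0\<^sub>v N"
        then obtain c0 where c0: "c0 < N" "v $ c0 \<noteq> 0" using vc by (metis eq_vecI carrier_vecD index_zero_vec(1,2))
        define Bn where "Bn js = A js + (if js \<in> valid_idx n k \<and> last js = 0 then v $ num n (butlast js) else 0)" for js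
        have Bnt: "is_tensor n k Bn"
          using assms(4) unfolding almost_symmetric_def is_tensor_def Bn_def by auto
        have Bnsym: "Bn (map (\<lambda>i. js ! p i) [0..<k]) = Bn js"
          if js: "js \<in> valid_idx n k" and p: "p permutes {..<k-1}" for js p
        proof -
          have lj: "length js = k" using js unfolding valid_idx_def by simp
          define bl where "bl = butlast js"
          define a where "a = last js"
          have jsd: "js = bl @ [a]" using lj k unfolding bl_def a_def
            by (metis append_butlast_last_id list.size(3) nat.distinct(1))
          have lbl: "length bl = m" using lj k bl_def by simp
          have pb: "p permutes {..<length bl}" using p lbl k by simp
          have js': "map (\<lambda>i. js ! p i) [0..<k] = permute_list p bl @ [a]"
            using perm_snoc[OF pb, of a] jsd lbl k by simp
          have Aeq: "A (map (\<lambda>i. js ! p i) [0..<k]) = A js"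
            using assms(4) js p unfolding almost_symmetric_def by blast
          have msb: "mset (permute_list p bl) = mset bl" by (rule mset_permute_list[OF pb])
          then have sb: "set (permute_list p bl) = set bl" by (metis set_mset_mset)
          have vbl: "\<forall>z\<in>set bl. z < n" using js jsd unfolding valid_idx_def by auto
          have vbl': "\<forall>z\<in>set (permute_list p bl). z < n" using vbl sb by simp
          have val': "permute_list p bl @ [a] \<in> valid_idx n k"
            using js jsd sb lbl unfolding valid_idx_def by auto
          have c1: "num n bl < N" using num_less[OF n0 vbl] lbl N_def by simp
          have c2: "num n (permute_list p bl) < N" using num_less[OF n0 vbl'] lbl N_def by simp
          have "cls (num n (permute_list p bl)) = cls (num n bl)"
            unfolding cls_def using dg_num[OF n0 vbl] dg_num[OF n0 vbl'] lbl msb by simp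
          then have veq: "v $ num n (permute_list p bl) = v $ num n bl" using vsym c1 c2 by blast
          show ?thesis unfolding Bn_def js' Aeq[unfolded js']
            using val' js veq jsd by simp
        qed
        have Bnas: "almost_symmetric n k Bn"
          unfolding almost_symmetric_def using Bnt Bnsym by blast
        have Bnsol: "matricize n k Bn * K = Y"
          unfolding sol_iff
        proof (intro allI impI)
          fix i t assume i: "i < n" and t: "t < T"
          have val: "dg n m c @ [i] \<in> valid_idx n k" for c
            using dg_valid[OF n0, of m c] i k unfolding valid_idx_def by auto
          have "(\<Sum>c<N. Bn (dg n m c @ [i]) * K $$ (c, t)) =
              (\<Sum>c<N. A (dg n m c @ [i]) * K $$ (c, t)) +
              (if i = 0 then (\<Sum>c<N. K $$ (c, t) * v $ c) else 0)"
          proof -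
            have "(\<Sum>c<N. Bn (dg n m c @ [i]) * K $$ (c, t)) =
              (\<Sum>c<N. A (dg n m c @ [i]) * K $$ (c, t) + (if i = 0 then K $$ (c, t) * v $ c else 0))"
            proof (rule sum.cong[OF refl])
              fix c assume "c \<in> {..<N}"
              then have cN: "c < N" by simp
              have "num n (dg n m c) = c" using num_dg[of n m c] cN N_def by simp
              then show "Bn (dg n m c @ [i]) * K $$ (c, t) =
                  A (dg n m c @ [i]) * K $$ (c, t) + (if i = 0 then K $$ (c, t) * v $ c else 0)"
                unfolding Bn_def using val[of c] by (simp add: algebra_simps)
            qed
            also have "\<dots> = (\<Sum>c<N. A (dg n m c @ [i]) * K $$ (c, t)) +
              (\<Sum>c<N. (if i = 0 then K $$ (c, t) * v $ c else 0))"
              by (rule sum.distrib)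
            finally show ?thesis by simp
          qed
          also have "\<dots> = Y $$ (i, t)"
            using Yent[OF i t] o sprod[OF vc t] t by simp
          finally show "(\<Sum>c<N. Bn (dg n m c @ [i]) * K $$ (c, t)) = Y $$ (i, t)" .
        qed
        have "Bn = A" using U Bnas Bnsol assms(4) PA by blast
        moreover have "Bn (dg n m c0 @ [0]) \<noteq> A (dg n m c0 @ [0])"
        proof -
          have val: "dg n m c0 @ [0] \<in> valid_idx n k"
            using dg_valid[OF n0, of m c0] n0 k unfolding valid_idx_def by auto
          have "num n (dg n m c0) = c0" using num_dg[of n m c0] c0 N_def by simp
          then show ?thesis unfolding Bn_def using val c0 by simp
        qed
        ultimately show False by simp
      qed
    qed
  next
    assume H: "\<forall>v \<in> symset cls N. (\<forall>t<T. col K t \<bullet> v = 0) \<longrightarrow> v = 0\<^sub>v N"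
    show "\<exists>!B. almost_symmetric n k B \<and> matricize n k B * K = Y"
    proof (rule ex1I[of _ A])
      show "almost_symmetric n k A \<and> matricize n k A * K = Y" using assms(4) PA by simp
      fix B assume PB: "almost_symmetric n k B \<and> matricize n k B * K = Y"
      have rowsEq: "B (dg n m c @ [i]) = A (dg n m c @ [i])" if i: "i < n" and c: "c < N" for i c
      proof -
        define v where "v = vec N (\<lambda>c. B (dg n m c @ [i]) - A (dg n m c @ [i]))"
        have vc: "v \<in> carrier_vec N" unfolding v_def by simp
        have "v \<in> symset cls N" unfolding symset_def
        proof (intro CollectI conjI allI impI vc)
          fix c c' assume cc: "c < N" "c' < N" "cls c = cls c'"
          have "B (dg n m c @ [i]) = B (dg n m c' @ [i])"
            by (rule as_rows[OF conjunct1[OF PB] k i], insert cc, auto simp: N_def cls_def)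
          moreover have "A (dg n m c @ [i]) = A (dg n m c' @ [i])"
            by (rule as_rows[OF assms(4) k i], insert cc, auto simp: N_def cls_def)
          ultimately show "v $ c = v $ c'" using cc unfolding v_def by simp
        qed
        moreover have "\<forall>t<T. col K t \<bullet> v = 0"
        proof (intro allI impI)
          fix t assume t: "t < T"
          have eB: "(\<Sum>c<N. B (dg n m c @ [i]) * K $$ (c, t)) = Y $$ (i, t)"
            using PB sol_iff i t by blast
          have eA: "(\<Sum>c<N. A (dg n m c @ [i]) * K $$ (c, t)) = Y $$ (i, t)"
            using PA sol_iff i t by blast
          have "col K t \<bullet> v = (\<Sum>c<N. K $$ (c, t) * v $ c)" by (rule sprod[OF vc t])
          also have "\<dots> = (\<Sum>c<N. B (dg n m c @ [i]) * K $$ (c, t) - A (dg n m c @ [i]) * K $$ (c, t))"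
            by (rule sum.cong[OF refl], simp add: v_def algebra_simps)
          also have "\<dots> = 0" using eA eB by (simp add: sum_subtractf)
          finally show "col K t \<bullet> v = 0" .
        qed
        ultimately have "v = 0\<^sub>v N" using H by blast
        then have "v $ c = 0" using c by simp
        then show ?thesis using c unfolding v_def by simp
      qed
      show "B = A"
      proof
        fix js
        show "B js = A js"
        proof (cases "js \<in> valid_idx n k")
          case False
          then show ?thesis using conjunct1[OF PB] assms(4)
            unfolding almost_symmetric_def is_tensor_def by simp
        next
          case True
          have lj: "length js = k" using True unfolding valid_idx_def by simp
          define bl where "bl = butlast js"
          define a where "a = last js"
          have jsd: "js = bl @ [a]" using lj k unfolding bl_def a_def
            by (metis append_butlast_last_id list.size(3) nat.distinct(1))
          have lbl: "length bl = m" using lj k bl_def by simp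
          have vbl: "\<forall>z\<in>set bl. z < n" using True jsd unfolding valid_idx_def by auto
          have a: "a < n" using True jsd unfolding valid_idx_def by auto
          have c1: "num n bl < N" using num_less[OF n0 vbl] lbl N_def by simp
          have "dg n m (num n bl) = bl" using dg_num[OF n0 vbl] lbl by simp
          then show ?thesis using rowsEq[OF a c1] jsd by simp
        qed
      qed
    qed
  qed
  show ?thesis
    using main LA card unfolding K_def X_def Y_def by simp
qed

end
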